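(* For all $i\ge0$, $j\ge-1$ and $X\in\{A,B,C,D\}$, $L_j^W\cdot F_iM_X\subset F_{i-j}M_X$.
   Context: Let $\Lambda(4)$ be the Grassmann superalgebra on odd generators $\xi_1,\dots,\xi_4$; $\xi_I=\xi_{i_1}\cdots\xi_{i_r}$, $\xi_{ij}=\xi_i\xi_j$. Let $K(1,4)_+=\mathbb C[t]\otimes\Lambda(4)$ with bracket $[f,g]=(2f-\sum_i\xi_i\partial_{\xi_i}f)\partial_tg-\partial_tf\,(2g-\sum_i\xi_i\partial_{\xi_i}g)+(-1)^{p(f)}\sum_i\partial_{\xi_i}f\,\partial_{\xi_i}g$, and $\mathfrak g=K(1,4)_+\oplus\mathbb CC$ the central extension by the 2-cocycle $\psi$ whose only nonzero values on the basis $\{t^m\xi_I\}$ are (up to skew-symmetry) $\psi(1,\xi_1\xi_2\xi_3\xi_4)=-2$, $\psi(\xi_i,\partial_{\xi_i}(\xi_1\xi_2\xi_3\xi_4))=-1$. Grade by $\deg t^m\xi_I=2m+|I|-2$, $\deg C=0$; $\mathfrak g_0=\langle C,t,\xi_{ij}\rangle$. $\mathfrak g_0^{ss}$ is spanned by $e_x=\frac12(-\xi_{13}-\xi_{24}-i\xi_{14}+i\xi_{23})$, $f_x=\frac12(\xi_{13}+\xi_{24}-i\xi_{14}+i\xi_{23})$, $h_x=-i\xi_{12}+i\xi_{34}$, $e_y=\frac12(-\xi_{13}+\xi_{24}+i\xi_{14}+i\xi_{23})$, $f_y=\frac12(\xi_{13}-\xi_{24}+i\xi_{14}+i\xi_{23})$,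 $h_y=-i\xi_{12}-i\xi_{34}$, identified with $x_1\partial_{x_2},x_2\partial_{x_1},x_1\partial_{x_1}-x_2\partial_{x_2},y_1\partial_{y_2},y_2\partial_{y_1},y_1\partial_{y_1}-y_2\partial_{y_2}$. Let $V_A=\mathbb C[x_1,x_2,y_1,y_2]$, $V_B=\mathbb C[\partial_{x_1},\partial_{x_2},y_1,y_2]$, $V_C=\mathbb C[\partial_{x_1},\partial_{x_2},\partial_{y_1},\partial_{y_2}]$, $V_D=\mathbb C[x_1,x_2,\partial_{y_1},\partial_{y_2}]$, on which $\mathfrak g_0^{ss}$ acts by derivations with $x_i\partial_{x_j}(x_k)=\delta_{jk}x_i$, $x_i\partial_{x_j}(\partial_{x_k})=-\delta_{ik}\partial_{x_j}$, $x_i\partial_{x_j}$ killing $y$- and $\partial_y$-variables, symmetrically for $y$. Let $E_x,E_y$ be the derivations $x_1\partial_{x_1}+x_2\partial_{x_2}$, $y_1\partial_{y_1}+y_2\partial_{y_2}$ with the same rule; $t$ acts as $-\frac12(E_x+E_y)+i_X$, $C$ as $\frac12(E_x-E_y)+j_X$, $(i_X,j_X)=(0,0),(1,-1),(2,0),(1,1)$ for $X=A,B,C,D$. $V_X^{m,n}$: subspace with $E_x=m,E_y=n$. $M_X=\bigoplus_{m,n}U(\mathfrak g)\otimes_{U(\mathfrak g_{\ge0})}V_X^{m,n}\cong U(\mathfrak g_{<0})\otimes V_X$ ($\mathfrak g_{>0}$ acting trivially on $V_X$). For $i\ge0$, $F_iU(\mathfrak g_{<0})$ is the span of products of at most $i$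 elements of $\mathfrak g_{<0}$, $F_iM_X=F_iU(\mathfrak g_{<0})\otimes V_X$, and $F_kM_X=0$ for $k<0$. Let $W(1,0)=\{p(t)\partial_t\}$ with its standard filtration $L_j^W=\{p(t)\partial_t:\ p\in t^{j+1}\mathbb C[t]\}$ ($j\ge-1$), embedded in $\mathfrak g$ as a Lie subalgebra via $p(t)\partial_t\mapsto\frac{p(t)}2\in\mathbb C[t]\otimes1\subset K(1,4)_+$; $L_j^W$ acts on $M_X$ through this embedding. *)

theory Defs
  imports Complex_Main "HOL-Computational_Algebra.Polynomial"
begin

section \<open>The Lie superalgebra g = K(1,4)_+ + C C\<close>

text \<open>Basis of g: Tm m I stands for t^m xi_I (I a subset of {1,2,3,4}), Cen for C.\<close>
datatype GB = Tm nat "nat set" | Cen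

definition gbasis :: "GB set" where
  "gbasis = {Tm m I | m I. I \<subseteq> {1,2,3,4}} \<union> {Cen}"

fun gdeg :: "GB \<Rightarrow> int" where
  "gdeg (Tm m I) = 2 * int m + int (card I) - 2"
| "gdeg Cen = 0"

fun gpar :: "GB \<Rightarrow> nat" where
  "gpar (Tm m I) = card I mod 2"
| "gpar Cen = 0"

text \<open>number of indices of I smaller than i (sign of the left derivative)\<close>
definition ltc :: "nat \<Rightarrow> nat set \<Rightarrow> nat" where
  "ltc i I = card {k \<in> I. k < i}"

text \<open>coefficient of xi_K in the product xi_I xi_J\<close>
definition prodc :: "nat set \<Rightarrow> nat set \<Rightarrow> nat set \<Rightarrow> complex" where
  "prodc I J K = (if I \<inter> J = {} \<and> K = I \<union> J
      then (-1) ^ card {(a, b). a \<in> I \<and> b \<in> J \<and> b < a} else 0)"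

text \<open>coefficient of xi_K in (d_{xi_i} xi_I)(d_{xi_i} xi_J)\<close>
definition dcoef :: "nat \<Rightarrow> nat set \<Rightarrow> nat set \<Rightarrow> nat set \<Rightarrow> complex" where
  "dcoef i I J K = (if i \<in> I \<and> i \<in> J
      then (-1) ^ (ltc i I + ltc i J) * prodc (I - {i}) (J - {i}) K else 0)"

text \<open>the cocycle psi on basis elements (super-skew-symmetric extension)\<close>
definition psi :: "nat \<Rightarrow> nat set \<Rightarrow> nat \<Rightarrow> nat set \<Rightarrow> complex" where
  "psi a I b J = (if a = 0 \<and> b = 0 then
      (if I = {} \<and> J = {1,2,3,4} then -2
       else if I = {1,2,3,4} \<and> J = {} then 2
       else (\<Sum>i\<in>{1..4}. if (I = {i} \<and> J = {1,2,3,4} - {i}) \<or> (J = {i} \<and> I = {1,2,3,4} - {i})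
                          then - ((-1) ^ ltc i {1,2,3,4}) else 0))
     else 0)"

text \<open>bracket [t^a xi_I, t^b xi_J] in g, as coefficient function on the basis\<close>
fun kbr :: "nat \<Rightarrow> nat set \<Rightarrow> nat \<Rightarrow> nat set \<Rightarrow> GB \<Rightarrow> complex" where
  "kbr a I b J (Tm n K) =
     (if a + b = n + 1 then
        (of_int (2 - int (card I)) * of_nat b - of_nat a * of_int (2 - int (card J))) * prodc I J K
      else 0)
   + (if a + b = n then (-1) ^ card I * (\<Sum>i\<in>{1..4}. dcoef i I J K) else 0)"
| "kbr a I b J Cen = psi a I b J"

fun brk :: "GB \<Rightarrow> GB \<Rightarrow> GB \<Rightarrow> complex" where
  "brk (Tm a I) (Tm b J) = kbr a I b J"
| "brk _ _ = (\<lambda>_. 0)"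

definition gdelta :: "GB \<Rightarrow> GB \<Rightarrow> complex" where
  "gdelta b = (\<lambda>c. if c = b then 1 else 0)"

definition xivec :: "complex \<Rightarrow> complex \<Rightarrow> complex \<Rightarrow> complex \<Rightarrow> complex \<Rightarrow> complex \<Rightarrow> GB \<Rightarrow> complex" where
  "xivec c13 c24 c14 c23 c12 c34 = (\<lambda>b.
     if b = Tm 0 {1,3} then c13 else if b = Tm 0 {2,4} then c24
     else if b = Tm 0 {1,4} then c14 else if b = Tm 0 {2,3} then c23
     else if b = Tm 0 {1,2} then c12 else if b = Tm 0 {3,4} then c34 else 0)"

definition ex_v :: "GB \<Rightarrow> complex" where "ex_v = xivec (-1/2) (-1/2) (-\<i>/2) (\<i>/2) 0 0"
definition fx_v :: "GB \<Rightarrow> complex" where "fx_v = xivec (1/2) (1/2) (-\<i>/2) (\<i>/2) 0 0"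
definition hx_v :: "GB \<Rightarrow> complex" where "hx_v = xivec 0 0 0 0 (-\<i>) \<i>"
definition ey_v :: "GB \<Rightarrow> complex" where "ey_v = xivec (-1/2) (1/2) (\<i>/2) (\<i>/2) 0 0"
definition fy_v :: "GB \<Rightarrow> complex" where "fy_v = xivec (1/2) (-1/2) (\<i>/2) (\<i>/2) 0 0"
definition hy_v :: "GB \<Rightarrow> complex" where "hy_v = xivec 0 0 0 0 (-\<i>) (-\<i>)"

datatype VX = A | B | C | D

text \<open>A monomial (a1,a2,b1,b2) is u1^a1 u2^a2 v1^b1 v2^b2 where u = x or d_x, v = y or d_y.\<close>
type_synonym mono = "nat \<times> nat \<times> nat \<times> nat"

definition xdual :: "VX \<Rightarrow> bool" where "xdual X = (X = B \<or> X = C)"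
definition ydual :: "VX \<Rightarrow> bool" where "ydual X = (X = C \<or> X = D)"

fun iX :: "VX \<Rightarrow> complex" where "iX A = 0" | "iX B = 1" | "iX C = 2" | "iX D = 1"
fun jX :: "VX \<Rightarrow> complex" where "jX A = 0" | "jX B = -1" | "jX C = 0" | "jX D = 1"

datatype slop = Raise | Lower | Hop | Eop
  \<comment> \<open>z1 d_z2, z2 d_z1, z1 d_z1 - z2 d_z2, z1 d_z1 + z2 d_z2\<close>

text \<open>action on a monomial in two variables (dual flag: variables are d_z1, d_z2)\<close>
fun pact :: "bool \<Rightarrow> slop \<Rightarrow> nat \<times> nat \<Rightarrow> complex \<times> (nat \<times> nat)" where
  "pact False Raise (a1, a2) = (of_nat a2, (a1 + 1, a2 - 1))"
| "pact False Lower (a1, a2) = (of_nat a1, (a1 - 1, a2 + 1))"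
| "pact False Hop (a1, a2) = (of_nat a1 - of_nat a2, (a1, a2))"
| "pact False Eop (a1, a2) = (of_nat a1 + of_nat a2, (a1, a2))"
| "pact True Raise (a1, a2) = (- of_nat a1, (a1 - 1, a2 + 1))"
| "pact True Lower (a1, a2) = (- of_nat a2, (a1 + 1, a2 - 1))"
| "pact True Hop (a1, a2) = (of_nat a2 - of_nat a1, (a1, a2))"
| "pact True Eop (a1, a2) = (- (of_nat a1 + of_nat a2), (a1, a2))"

definition mdelta :: "mono \<Rightarrow> mono \<Rightarrow> complex" where
  "mdelta m = (\<lambda>m'. if m' = m then 1 else 0)"

definition opx :: "VX \<Rightarrow> slop \<Rightarrow> mono \<Rightarrow> mono \<Rightarrow> complex" where
  "opx X s m = (case m of (a1, a2, b1, b2) \<Rightarrow>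
     (case pact (xdual X) s (a1, a2) of (c, (a1', a2')) \<Rightarrow> (\<lambda>m'. c * mdelta (a1', a2', b1, b2) m')))"

definition opy :: "VX \<Rightarrow> slop \<Rightarrow> mono \<Rightarrow> mono \<Rightarrow> complex" where
  "opy X s m = (case m of (a1, a2, b1, b2) \<Rightarrow>
     (case pact (ydual X) s (b1, b2) of (c, (b1', b2')) \<Rightarrow> (\<lambda>m'. c * mdelta (a1, a2, b1', b2') m')))"

definition Exv :: "VX \<Rightarrow> mono \<Rightarrow> complex" where
  "Exv X m = (case m of (a1, a2, b1, b2) \<Rightarrow> fst (pact (xdual X) Eop (a1, a2)))"
definition Eyv :: "VX \<Rightarrow> mono \<Rightarrow> complex" where
  "Eyv X m = (case m of (a1, a2, b1, b2) \<Rightarrow> fst (pact (ydual X) Eop (b1, b2)))"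

definition opC :: "VX \<Rightarrow> mono \<Rightarrow> mono \<Rightarrow> complex" where
  "opC X m = (\<lambda>m'. ((Exv X m - Eyv X m) / 2 + jX X) * mdelta m m')"
definition opT :: "VX \<Rightarrow> mono \<Rightarrow> mono \<Rightarrow> complex" where
  "opT X m = (\<lambda>m'. (- (Exv X m + Eyv X m) / 2 + iX X) * mdelta m m')"

text \<open>pairs (x, rho(x)) for a spanning set of g_{>=0}: C, t, e_x,...,h_y, and g_{>0} acting by 0\<close>
definition actgens :: "VX \<Rightarrow> ((GB \<Rightarrow> complex) \<times> (mono \<Rightarrow> mono \<Rightarrow> complex)) set" where
  "actgens X =
     {(gdelta Cen, opC X), (gdelta (Tm 1 {}), opT X),
      (ex_v, opx X Raise), (fx_v, opx X Lower), (hx_v, opx X Hop),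
      (ey_v, opy X Raise), (fy_v, opy X Lower), (hy_v, opy X Hop)}
   \<union> {(gdelta b, (\<lambda>_ _. 0)) | b. b \<in> gbasis \<and> gdeg b > 0}"

section \<open>M_X as a quotient of T(g) \<otimes> V_X\<close>

text \<open>Elements of T(g) \<otimes> V_X are (finite) coefficient functions on words of basis elements
  times monomials.\<close>
type_synonym key = "GB list \<times> mono"

inductive_set lspan :: "('k \<Rightarrow> complex) set \<Rightarrow> ('k \<Rightarrow> complex) set" for S where
  zero: "(\<lambda>_. 0) \<in> lspan S"
| base: "f \<in> S \<Longrightarrow> f \<in> lspan S"
| add: "f \<in> lspan S \<Longrightarrow> g \<in> lspan S \<Longrightarrow> (\<lambda>k. f k + g k) \<in> lspan S"
| smul: "f \<in> lspan S \<Longrightarrow> (\<lambda>k. c * f k) \<in> lspan S"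

text \<open>u \<otimes> x \<otimes> w \<otimes> m for words u, w, an element x of g and a monomial m\<close>
definition embw :: "GB list \<Rightarrow> (GB \<Rightarrow> complex) \<Rightarrow> GB list \<Rightarrow> mono \<Rightarrow> key \<Rightarrow> complex" where
  "embw u x w m = (\<lambda>(w', m'). if m' = m \<and> length w' = length u + 1 + length w
       \<and> take (length u) w' = u \<and> drop (length u + 1) w' = w then x (w' ! length u) else 0)"

text \<open>u \<otimes> v for a word u and v in V_X\<close>
definition tv :: "GB list \<Rightarrow> (mono \<Rightarrow> complex) \<Rightarrow> key \<Rightarrow> complex" where
  "tv u v = (\<lambda>(w', m'). if w' = u then v m' else 0)"

text \<open>left multiplication by x in g\<close>
definition lact :: "(GB \<Rightarrow> complex) \<Rightarrow> (key \<Rightarrow> complex) \<Rightarrow> key \<Rightarrow> complex" where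
  "lact x f = (\<lambda>(w, m). case w of [] \<Rightarrow> 0 | b # w' \<Rightarrow> x b * f (w', m))"

text \<open>generators of the kernel of T(g) \<otimes> V_X \<rightarrow> U(g) \<otimes>_{U(g_{>=0})} V_X\<close>
definition relgens :: "VX \<Rightarrow> (key \<Rightarrow> complex) set" where
  "relgens X =
     {(\<lambda>k. embw u (gdelta a) (b # w) m k
           - (-1) ^ (gpar a * gpar b) * embw u (gdelta b) (a # w) m k
           - embw u (brk a b) w m k)
       | u a b w m. u \<in> lists gbasis \<and> w \<in> lists gbasis \<and> a \<in> gbasis \<and> b \<in> gbasis}
   \<union> {(\<lambda>k. embw u x [] m k - tv u (r m) k)
       | u x r m. u \<in> lists gbasis \<and> (x, r) \<in> actgens X}"

definition gneg :: "GB set" where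
  "gneg = {b \<in> gbasis. gdeg b < 0}"

text \<open>preimage in T(g) \<otimes> V_X of F_k M_X (F_k M_X = 0 for k < 0)\<close>
definition Fpre :: "VX \<Rightarrow> int \<Rightarrow> (key \<Rightarrow> complex) set" where
  "Fpre X k = lspan (relgens X \<union>
     (if k < 0 then {} else {tv w (mdelta m) | w m. w \<in> lists gneg \<and> length w \<le> nat k}))"

text \<open>the element p(t)/2 of g corresponding to p(t) d_t in W(1,0)\<close>
definition wvec :: "complex poly \<Rightarrow> GB \<Rightarrow> complex" where
  "wvec p = (\<lambda>b. case b of Tm m I \<Rightarrow> (if I = {} then coeff p m / 2 else 0) | Cen \<Rightarrow> 0)"

end

theory Submission
  imports Defs
begin

lemma lspan_mono: "f \<in> lspan S \<Longrightarrow> S \<subseteq> T \<Longrightarrow> f \<in> lspan T"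
  by (induction rule: lspan.induct) (auto intro: lspan.intros)

lemma lspan_sum: "finite AA \<Longrightarrow> (\<forall>c\<in>AA. g c \<in> lspan T) \<Longrightarrow> (\<lambda>k. \<Sum>c\<in>AA. g c k) \<in> lspan T"
proof (induction AA rule: finite_induct)
  case empty then show ?case by (simp add: lspan.zero)
next
  case (insert a AA)
  then show ?case using lspan.add[where f="g a" and g="\<lambda>k. \<Sum>c\<in>AA. g c k"] by simp
qed

lemma lspan_diff3: "f \<in> lspan T \<Longrightarrow> g \<in> lspan T \<Longrightarrow> h \<in> lspan T \<Longrightarrow>
   (\<lambda>k. f k + s * g k + h k) \<in> lspan T"
  by (intro lspan.add lspan.smul)

lemma lact_gdelta_embw: "lact (gdelta b) (embw u x w m) = embw (b#u) x w m"
  by (auto simp: lact_def embw_def gdelta_def fun_eq_iff split: list.split)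

lemma lact_gdelta_tv: "lact (gdelta b) (tv u v) = tv (b#u) v"
  by (auto simp: lact_def tv_def gdelta_def fun_eq_iff split: list.split)

lemma lact_lin3: "lact x (\<lambda>k. f k - s * g k - h k) = (\<lambda>k. lact x f k - s * lact x g k - lact x h k)"
  by (auto simp: lact_def fun_eq_iff algebra_simps split: list.split)

lemma lact_lin2: "lact x (\<lambda>k. f k - h k) = (\<lambda>k. lact x f k - lact x h k)"
  by (auto simp: lact_def fun_eq_iff algebra_simps split: list.split)

lemma lact_relgens: assumes hb: "b \<in> gbasis" and hr: "r \<in> relgens X" shows "lact (gdelta b) r \<in> relgens X"
  using hr[unfolded relgens_def]
proof (elim UnE CollectE exE conjE)
  fix u a c w m
  assume h0: "r = (\<lambda>k. embw u (gdelta a) (c # w) m k -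
              (- 1) ^ (gpar a * gpar c) * embw u (gdelta c) (a # w) m k - embw u (brk a c) w m k)"
     "u \<in> lists gbasis" "w \<in> lists gbasis" "a \<in> gbasis" "c \<in> gbasis"
  note h = hb h0
  have "lact (gdelta b) r = (\<lambda>k. embw (b#u) (gdelta a) (c # w) m k -
              (- 1) ^ (gpar a * gpar c) * embw (b#u) (gdelta c) (a # w) m k - embw (b#u) (brk a c) w m k)"
    unfolding h(2) lact_lin3 lact_gdelta_embw ..
  moreover have "b#u \<in> lists gbasis" using h by simp
  ultimately show ?thesis unfolding relgens_def
    apply (intro UnI1 CollectI)
    apply (rule exI[where x="b#u"], rule exI[where x=a], rule exI[where x=c], rule exI[where x=w], rule exI[where x=m])
    using h by simp
next
  fix u x ra m
  assume h0: "r = (\<lambda>k. embw u x [] m k - tv u (ra m) k)"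
     "u \<in> lists gbasis" "(x, ra) \<in> actgens X"
  note h = hb h0
  have "lact (gdelta b) r = (\<lambda>k. embw (b#u) x [] m k - tv (b#u) (ra m) k)"
    unfolding h(2) lact_lin2 lact_gdelta_embw lact_gdelta_tv ..
  moreover have "b#u \<in> lists gbasis" using h by simp
  ultimately show ?thesis unfolding relgens_def
    apply (intro UnI2 CollectI)
    apply (rule exI[where x="b#u"], rule exI[where x=x], rule exI[where x=ra], rule exI[where x=m])
    using h by simp
qed

lemma lact_zero: "lact x (\<lambda>_. 0) = (\<lambda>_. 0)"
  by (auto simp: lact_def fun_eq_iff split: list.split)
lemma lact_add: "lact x (\<lambda>k. f k + g k) = (\<lambda>k. lact x f k + lact x g k)"
  by (auto simp: lact_def fun_eq_iff algebra_simps split: list.split)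
lemma lact_smul: "lact x (\<lambda>k. c * f k) = (\<lambda>k. c * lact x f k)"
  by (auto simp: lact_def fun_eq_iff algebra_simps split: list.split)

lemma lact_lspan_rel: "f \<in> lspan (relgens X) \<Longrightarrow> b \<in> gbasis \<Longrightarrow> lact (gdelta b) f \<in> lspan (relgens X)"
  by (induction rule: lspan.induct)
     (auto simp: lact_zero lact_add lact_smul intro: lspan.intros lact_relgens)

lemma rel_Fpre: "f \<in> lspan (relgens X) \<Longrightarrow> f \<in> Fpre X k"
  unfolding Fpre_def by (erule lspan_mono) auto

lemma Fpre_mono: "k \<le> k' \<Longrightarrow> f \<in> Fpre X k \<Longrightarrow> f \<in> Fpre X k'"
proof -
  assume kk: "k \<le> k'" and f: "f \<in> Fpre X k"
  have n: "nat k \<le> nat k'" using kk by (rule nat_mono)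
  have sub: "{tv w (mdelta m) | w m. w \<in> lists gneg \<and> length w \<le> nat k}
      \<subseteq> {tv w (mdelta m) | w m. w \<in> lists gneg \<and> length w \<le> nat k'}"
    using n le_trans by blast
  have "(if k < 0 then {} else {tv w (mdelta m) | w m. w \<in> lists gneg \<and> length w \<le> nat k})
      \<subseteq> (if k' < 0 then {} else {tv w (mdelta m) | w m. w \<in> lists gneg \<and> length w \<le> nat k'})"
    using sub kk by (cases "k < 0"; cases "k' < 0") auto
  then show ?thesis using f unfolding Fpre_def by (elim lspan_mono) (rule Un_mono[OF order_refl])
qed

lemma gneg_basis: "a \<in> gneg \<Longrightarrow> a \<in> gbasis" by (simp add: gneg_def)

lemma lact_neg: "f \<in> Fpre X k \<Longrightarrow> a \<in> gneg \<Longrightarrow> lact (gdelta a) f \<in> Fpre X (k+1)"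
  unfolding Fpre_def
proof (induction rule: lspan.induct)
  case zero then show ?case by (simp add: lact_zero lspan.zero)
next
  case (base f)
  show ?case
  proof (cases "f \<in> relgens X")
    case True
    then have "lact (gdelta a) f \<in> lspan (relgens X)"
      using base by (intro lact_lspan_rel) (auto simp: gneg_def intro: lspan.base)
    then show ?thesis by (rule lspan_mono) auto
  next
    case False
    have fin: "f \<in> (if k < 0 then {} else {tv w (mdelta m) | w m. w \<in> lists gneg \<and> length w \<le> nat k})"
      using base False by blast
    then have nk: "\<not> k < 0" by (cases "k < 0") auto
    with fin have "f \<in> {tv w (mdelta m) | w m. w \<in> lists gneg \<and> length w \<le> nat k}" by simp
    then obtain w m where "f = tv w (mdelta m)" "w \<in> lists gneg" "length w \<le> nat k"
      by blast
    note wm = this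
    have e: "lact (gdelta a) f = tv (a#w) (mdelta m)" using wm by (simp add: lact_gdelta_tv)
    have l: "a#w \<in> lists gneg" "length (a#w) \<le> nat (k+1)" using wm base.prems nk by auto
    have nk1: "\<not> k + 1 < 0" using nk by simp
    have "tv (a#w) (mdelta m) \<in> {tv w (mdelta m) | w m. w \<in> lists gneg \<and> length w \<le> nat (k+1)}"
      using l by blast
    then show ?thesis unfolding e using nk1 by (intro lspan.base UnI2) simp
  qed
next
  case (add f g) then show ?case by (simp add: lact_add lspan.add)
next
  case (smul f c) then show ?case by (simp add: lact_smul lspan.smul)
qed

lemma gdelta_sum: "finite S \<Longrightarrow> (\<And>c. x c \<noteq> 0 \<Longrightarrow> c \<in> S) \<Longrightarrow> (\<Sum>c\<in>S. x c * gdelta c bb) = x bb"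
proof -
  assume S: "finite S" "\<And>c. x c \<noteq> 0 \<Longrightarrow> c \<in> S"
  have "(\<Sum>c\<in>S. x c * gdelta c bb) = (\<Sum>c\<in>S. if bb = c then x c else 0)"
    by (rule sum.cong) (auto simp: gdelta_def)
  also have "\<dots> = (if bb \<in> S then x bb else 0)" using S(1) by (simp add: sum.delta)
  also have "\<dots> = x bb" using S(2) by auto
  finally show ?thesis .
qed

lemma embw_fin:
  assumes "finite S" "\<And>c. x c \<noteq> 0 \<Longrightarrow> c \<in> S"
  shows "embw u x w m = (\<lambda>k. \<Sum>c\<in>S. x c * embw u (gdelta c) w m k)"
proof (rule ext, clarify)
  fix w' m'
  show "embw u x w m (w', m') = (\<Sum>c\<in>S. x c * embw u (gdelta c) w m (w', m'))"
  proof (cases "m' = m \<and> length w' = length u + 1 + length w \<and> take (length u) w' = u \<and> drop (length u + 1) w' = w")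
    case True
    then have "embw u x w m (w', m') = x (w' ! length u)" "\<And>c. embw u (gdelta c) w m (w', m') = gdelta c (w' ! length u)"
      by (simp_all add: embw_def)
    then show ?thesis using gdelta_sum[OF assms] by simp
  next
    case False
    then have "embw u x w m (w', m') = 0" "\<And>c. embw u (gdelta c) w m (w', m') = 0"
      by (auto simp add: embw_def)
    then show ?thesis by simp
  qed
qed

lemma prodc_nz: "prodc I J K \<noteq> 0 \<Longrightarrow> I \<inter> J = {} \<and> K = I \<union> J"
  by (auto simp: prodc_def split: if_splits)

lemma kbr_deg:
  assumes I: "I \<subseteq> {1,2,3,4}" and J: "J \<subseteq> {1,2,3,4}" and nz: "kbr a I b J (Tm n K) \<noteq> 0"
  shows "K \<subseteq> {1,2,3,4} \<and> 2 * int n + int (card K) - 2 = (2 * int a + int (card I) - 2) + (2 * int b + int (card J) - 2)"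
proof -
  have fI: "finite I" and fJ: "finite J" using I J finite_subset by auto
  from nz consider
      (t1) "a + b = n + 1" "prodc I J K \<noteq> 0"
    | (t2) "a + b = n" "(\<Sum>i\<in>{1..4}. dcoef i I J K) \<noteq> 0"
    by (auto split: if_splits)
  then show ?thesis
  proof cases
    case t1
    then have "I \<inter> J = {}" "K = I \<union> J" using prodc_nz by auto
    moreover have "card (I \<union> J) = card I + card J" using calculation fI fJ card_Un_disjoint by blast
    ultimately show ?thesis using t1 I J by auto
  next
    case t2
    then obtain i where "dcoef i I J K \<noteq> 0" by (meson sum.neutral)
    then have h: "i \<in> I" "i \<in> J" "prodc (I - {i}) (J - {i}) K \<noteq> 0"
      by (auto simp: dcoef_def split: if_splits)
    then have d: "(I - {i}) \<inter> (J - {i}) = {}" "K = (I - {i}) \<union> (J - {i})" using prodc_nz by auto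
    have "card K = card (I - {i}) + card (J - {i})" using d fI fJ card_Un_disjoint by (metis finite_Diff)
    moreover have "card (I - {i}) + 1 = card I" using h(1) fI card_Suc_Diff1 by fastforce
    moreover have "card (J - {i}) + 1 = card J" using h(2) fJ card_Suc_Diff1 by fastforce
    ultimately show ?thesis using t2 d I J by auto
  qed
qed

lemma psi_deg:
  assumes nz: "psi a I b J \<noteq> 0"
  shows "a = 0 \<and> b = 0 \<and> card I + card J = 4"
proof -
  have ab: "a = 0" "b = 0" using nz by (auto simp: psi_def split: if_splits)
  show ?thesis
  proof (cases "(I = {} \<and> J = {1,2,3,4}) \<or> (I = {1,2,3,4} \<and> J = {})")
    case True then show ?thesis using ab by auto
  next
    case False
    have "psi a I b J = (\<Sum>i\<in>{1..4::nat}. if (I = {i} \<and> J = {1,2,3,4} - {i}) \<or> (J = {i} \<and> I = {1,2,3,4} - {i})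
                          then - ((-1::complex) ^ ltc i {1,2,3,4}) else 0)"
    proof -
      have nA: "(I = {} \<and> J = {1,2,3,4}) = False" and nB: "(I = {1,2,3,4} \<and> J = {}) = False" using False by auto
      show ?thesis unfolding psi_def ab by (simp only: simp_thms if_True nA nB if_False)
    qed
    then have snz: "(\<Sum>i\<in>{1..4::nat}. if (I = {i} \<and> J = {1,2,3,4} - {i}) \<or> (J = {i} \<and> I = {1,2,3,4} - {i})
                          then - ((-1::complex) ^ ltc i {1,2,3,4}) else 0) \<noteq> 0"
      using nz by simp
    then obtain i where i: "i \<in> {1..4::nat}" "(I = {i} \<and> J = {1,2,3,4} - {i}) \<or> (J = {i} \<and> I = {1,2,3,4} - {i})"
    proof -
      assume r: "\<And>i. i \<in> {1..4::nat} \<Longrightarrow> (I = {i} \<and> J = {1,2,3,4} - {i}) \<or> (J = {i} \<and> I = {1,2,3,4} - {i}) \<Longrightarrow> thesis"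
      show thesis
      proof (rule sum.not_neutral_contains_not_neutral[OF snz])
        fix i assume "i \<in> {1..4::nat}" "(if (I = {i} \<and> J = {1,2,3,4} - {i}) \<or> (J = {i} \<and> I = {1,2,3,4} - {i})
                          then - ((-1::complex) ^ ltc i {1,2,3,4}) else 0) \<noteq> 0"
        then show thesis using r by (auto split: if_splits)
      qed
    qed
    have "i = 1 \<or> i = 2 \<or> i = 3 \<or> i = 4" using i(1) by auto
    then have "card ({1,2,3,4::nat} - {i}) = 3" by (elim disjE) simp_all
    then show ?thesis using ab i by auto
  qed
qed

lemma brk_deg:
  assumes "a \<in> gbasis" "b \<in> gbasis" "brk a b c \<noteq> 0"
  shows "c \<in> gbasis \<and> gdeg c = gdeg a + gdeg b"
proof -
  obtain n1 I where a: "a = Tm n1 I" "I \<subseteq> {1,2,3,4}" using assms by (cases a) (auto simp: gbasis_def)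
  obtain n2 J where b: "b = Tm n2 J" "J \<subseteq> {1,2,3,4}" using assms by (cases b) (auto simp: gbasis_def)
  show ?thesis
  proof (cases c)
    case (Tm n K)
    then show ?thesis using kbr_deg[OF a(2) b(2), of n1 n2 n K] assms a b by (auto simp: gbasis_def)
  next
    case Cen
    then show ?thesis using psi_deg[of n1 I n2 J] assms a b by (auto simp: gbasis_def)
  qed
qed

lemma gb_fin: "finite {c \<in> gbasis. gdeg c \<le> DD}"
proof -
  have "{c \<in> gbasis. gdeg c \<le> DD} \<subseteq> insert Cen ((\<lambda>(n,K). Tm n K) ` ({..nat DD + 2} \<times> Pow {1,2,3,4}))"
  proof
    fix c assume c: "c \<in> {c \<in> gbasis. gdeg c \<le> DD}"
    show "c \<in> insert Cen ((\<lambda>(n,K). Tm n K) ` ({..nat DD + 2} \<times> Pow {1,2,3,4}))"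
    proof (cases c)
      case (Tm n K)
      then have "n \<le> nat DD + 2" "K \<subseteq> {1,2,3,4}" using c by (auto simp: gbasis_def)
      then show ?thesis using Tm by auto
    qed simp
  qed
  then show ?thesis by (rule finite_subset) auto
qed

lemma embw_add: "embw u (\<lambda>b. x b + y b) w m = (\<lambda>k. embw u x w m k + embw u y w m k)"
  by (auto simp: embw_def fun_eq_iff)
lemma embw_smul: "embw u (\<lambda>b. c * x b) w m = (\<lambda>k. c * embw u x w m k)"
  by (auto simp: embw_def fun_eq_iff)
lemma tv_smul: "tv u (\<lambda>m'. c * mdelta m0 m') = (\<lambda>k. c * tv u (mdelta m0) k)"
  by (auto simp: tv_def fun_eq_iff)
lemma embw_nil_tv: "embw [] (gdelta b) w m = tv (b#w) (mdelta m)"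
proof (rule ext, clarify)
  fix w' m'
  show "embw [] (gdelta b) w m (w', m') = tv (b#w) (mdelta m) (w', m')"
    by (cases w') (auto simp: embw_def tv_def gdelta_def mdelta_def)
qed

lemma Fpre_add: "f \<in> Fpre X k \<Longrightarrow> g \<in> Fpre X k \<Longrightarrow> (\<lambda>k'. f k' + g k') \<in> Fpre X k"
  unfolding Fpre_def by (rule lspan.add)
lemma Fpre_smul: "f \<in> Fpre X k \<Longrightarrow> (\<lambda>k'. c * f k') \<in> Fpre X k"
  unfolding Fpre_def by (rule lspan.smul)
lemma Fpre_zero: "(\<lambda>_. 0) \<in> Fpre X k"
  unfolding Fpre_def by (rule lspan.zero)

definition Zs :: "VX \<Rightarrow> (GB \<Rightarrow> complex) set" where
  "Zs X = {x. \<forall>m. embw [] x [] m \<in> Fpre X 0}"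

lemma Zs_add: "x \<in> Zs X \<Longrightarrow> y \<in> Zs X \<Longrightarrow> (\<lambda>b. x b + y b) \<in> Zs X"
  unfolding Zs_def by (simp add: embw_add Fpre_add)
lemma Zs_smul: "x \<in> Zs X \<Longrightarrow> (\<lambda>b. c * x b) \<in> Zs X"
  unfolding Zs_def by (simp add: embw_smul Fpre_smul)

lemma gen_in: "w \<in> lists gneg \<Longrightarrow> length w \<le> nat k \<Longrightarrow> 0 \<le> k \<Longrightarrow> tv w (mdelta m) \<in> Fpre X k"
proof -
  assume a: "w \<in> lists gneg" "length w \<le> nat k" "0 \<le> k"
  have "tv w (mdelta m) \<in> {tv w (mdelta m) | w m. w \<in> lists gneg \<and> length w \<le> nat k}" using a by blast
  moreover have "\<not> k < 0" using a by simp
  then have "(if k < 0 then {} else {tv w (mdelta m) | w m. w \<in> lists gneg \<and> length w \<le> nat k}) = {tv w (mdelta m) | w m. w \<in> lists gneg \<and> length w \<le> nat k}"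
    by (rule if_not_P)
  ultimately show ?thesis unfolding Fpre_def
    apply -
    apply (rule lspan.base)
    apply (rule UnI2)
    apply (simp only:)
    done
qed

lemma gen0: "tv [] (mdelta m) \<in> Fpre X 0"
  by (rule gen_in) auto

lemma Zs_act:
  assumes "(x, r) \<in> actgens X" and "\<And>m. \<exists>c m''. r m = (\<lambda>m'. c * mdelta m'' m')"
  shows "x \<in> Zs X"
  unfolding Zs_def
proof (rule CollectI, rule allI)
  fix m
  obtain c m'' where r: "r m = (\<lambda>m'. c * mdelta m'' m')" using assms(2) by blast
  have rel: "(\<lambda>k. embw [] x [] m k - tv [] (r m) k) \<in> relgens X"
    unfolding relgens_def using assms(1) by blast
  have "(\<lambda>k. (embw [] x [] m k - tv [] (r m) k) + c * tv [] (mdelta m'') k) \<in> Fpre X 0"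
    unfolding Fpre_def
    apply (rule lspan.add)
     apply (rule rel_Fpre[unfolded Fpre_def], rule lspan.base, rule rel)
    apply (rule lspan.smul, rule gen0[unfolded Fpre_def])
    done
  moreover have "(\<lambda>k. (embw [] x [] m k - tv [] (r m) k) + c * tv [] (mdelta m'') k) = embw [] x [] m"
    by (simp add: r tv_smul)
  ultimately show "embw [] x [] m \<in> Fpre X 0" by simp
qed

lemma opx_form: "\<exists>c m''. opx X s m = (\<lambda>m'. c * mdelta m'' m')"
proof -
  obtain a1 a2 b1 b2 where m: "m = (a1, a2, b1, b2)" by (cases m) auto
  obtain c a1' a2' where p: "pact (xdual X) s (a1, a2) = (c, (a1', a2'))" by (metis prod.exhaust)
  show ?thesis by (rule exI[of _ c], rule exI[of _ "(a1', a2', b1, b2)"]) (simp add: opx_def m p)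
qed
lemma opy_form: "\<exists>c m''. opy X s m = (\<lambda>m'. c * mdelta m'' m')"
proof -
  obtain a1 a2 b1 b2 where m: "m = (a1, a2, b1, b2)" by (cases m) auto
  obtain c b1' b2' where p: "pact (ydual X) s (b1, b2) = (c, (b1', b2'))" by (metis prod.exhaust)
  show ?thesis by (rule exI[of _ c], rule exI[of _ "(a1, a2, b1', b2')"]) (simp add: opy_def m p)
qed

lemma act_mem:
  "(gdelta Cen, opC X) \<in> actgens X" "(gdelta (Tm 1 {}), opT X) \<in> actgens X"
  "(ex_v, opx X Raise) \<in> actgens X" "(fx_v, opx X Lower) \<in> actgens X" "(hx_v, opx X Hop) \<in> actgens X"
  "(ey_v, opy X Raise) \<in> actgens X" "(fy_v, opy X Lower) \<in> actgens X" "(hy_v, opy X Hop) \<in> actgens X"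
  unfolding actgens_def by (intro UnI1 insertI1 insertI2)+

lemma opC_form: "\<exists>c m''. opC X m = (\<lambda>m'. c * mdelta m'' m')"
  unfolding opC_def by blast
lemma opT_form: "\<exists>c m''. opT X m = (\<lambda>m'. c * mdelta m'' m')"
  unfolding opT_def by blast

lemma Zs_gens:
  "gdelta Cen \<in> Zs X" "gdelta (Tm 1 {}) \<in> Zs X" "ex_v \<in> Zs X" "fx_v \<in> Zs X" "hx_v \<in> Zs X"
  "ey_v \<in> Zs X" "fy_v \<in> Zs X" "hy_v \<in> Zs X"
  by (rule Zs_act, rule act_mem, (rule opC_form opT_form opx_form opy_form))+

lemma xivec_smul: "c * xivec a1 a2 a3 a4 a5 a6 b = xivec (c*a1) (c*a2) (c*a3) (c*a4) (c*a5) (c*a6) b"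
  by (simp add: xivec_def)
lemma xivec_add: "xivec a1 a2 a3 a4 a5 a6 b + xivec c1 c2 c3 c4 c5 c6 b = xivec (a1+c1) (a2+c2) (a3+c3) (a4+c4) (a5+c5) (a6+c6) b"
  by (simp add: xivec_def)

lemma setne:
  "{1,3} \<noteq> ({2,4}::nat set)" "{1,3} \<noteq> ({1,4}::nat set)" "{1,3} \<noteq> ({2,3}::nat set)" "{1,3} \<noteq> ({1,2}::nat set)" "{1,3} \<noteq> ({3,4}::nat set)"
  "{2,4} \<noteq> ({1,4}::nat set)" "{2,4} \<noteq> ({2,3}::nat set)" "{2,4} \<noteq> ({1,2}::nat set)" "{2,4} \<noteq> ({3,4}::nat set)"
  "{1,4} \<noteq> ({2,3}::nat set)" "{1,4} \<noteq> ({1,2}::nat set)" "{1,4} \<noteq> ({3,4}::nat set)"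
  "{2,3} \<noteq> ({1,2}::nat set)" "{2,3} \<noteq> ({3,4}::nat set)" "{1,2} \<noteq> ({3,4}::nat set)"
  by (simp_all add: set_eq_iff, presburger+)

lemma setneS:
  "{Suc 0,3} \<noteq> ({2,4}::nat set)" "{Suc 0,3} \<noteq> ({Suc 0,4}::nat set)" "{Suc 0,3} \<noteq> ({2,3}::nat set)" "{Suc 0,3} \<noteq> ({Suc 0,2}::nat set)" "{Suc 0,3} \<noteq> ({3,4}::nat set)"
  "{2,4} \<noteq> ({Suc 0,4}::nat set)" "{2,4} \<noteq> ({2,3}::nat set)" "{2,4} \<noteq> ({Suc 0,2}::nat set)" "{2,4} \<noteq> ({3,4}::nat set)"
  "{Suc 0,4} \<noteq> ({2,3}::nat set)" "{Suc 0,4} \<noteq> ({Suc 0,2}::nat set)" "{Suc 0,4} \<noteq> ({3,4}::nat set)"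
  "{2,3} \<noteq> ({Suc 0,2}::nat set)" "{2,3} \<noteq> ({3,4}::nat set)" "{Suc 0,2} \<noteq> ({3,4}::nat set)"
  by (simp_all add: set_eq_iff, presburger+)

lemmas setne2 = setne setne[THEN not_sym] setneS setneS[THEN not_sym]

lemma g13: "gdelta (Tm 0 {1,3}) = xivec 1 0 0 0 0 0"
  by (rule ext, case_tac "x = Tm 0 {1,3}") (simp_all add: gdelta_def xivec_def setne2)
lemma g24: "gdelta (Tm 0 {2,4}) = xivec 0 1 0 0 0 0"
  by (rule ext, case_tac "x = Tm 0 {2,4}") (simp_all add: gdelta_def xivec_def setne2)
lemma g14: "gdelta (Tm 0 {1,4}) = xivec 0 0 1 0 0 0"
  by (rule ext, case_tac "x = Tm 0 {1,4}") (simp_all add: gdelta_def xivec_def setne2)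
lemma g23: "gdelta (Tm 0 {2,3}) = xivec 0 0 0 1 0 0"
  by (rule ext, case_tac "x = Tm 0 {2,3}") (simp_all add: gdelta_def xivec_def setne2)
lemma g12: "gdelta (Tm 0 {1,2}) = xivec 0 0 0 0 1 0"
  by (rule ext, case_tac "x = Tm 0 {1,2}") (simp_all add: gdelta_def xivec_def setne2)
lemma g34: "gdelta (Tm 0 {3,4}) = xivec 0 0 0 0 0 1"
  by (rule ext, case_tac "x = Tm 0 {3,4}") (simp_all add: gdelta_def xivec_def setne2)

lemma d13: "gdelta (Tm 0 {1,3}) = (\<lambda>b. (1/2) * fx_v b + ((-1/2) * ex_v b + ((1/2) * fy_v b + (-1/2) * ey_v b)))"
  unfolding g13 fx_v_def ex_v_def fy_v_def ey_v_def xivec_smul xivec_add by simp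
lemma d24: "gdelta (Tm 0 {2,4}) = (\<lambda>b. (1/2) * fx_v b + ((-1/2) * ex_v b + ((-1/2) * fy_v b + (1/2) * ey_v b)))"
  unfolding g24 fx_v_def ex_v_def fy_v_def ey_v_def xivec_smul xivec_add by simp
lemma d23: "gdelta (Tm 0 {2,3}) = (\<lambda>b. (-\<i>/2) * fx_v b + ((-\<i>/2) * ex_v b + ((-\<i>/2) * fy_v b + (-\<i>/2) * ey_v b)))"
  unfolding g23 fx_v_def ex_v_def fy_v_def ey_v_def xivec_smul xivec_add by simp
lemma d14: "gdelta (Tm 0 {1,4}) = (\<lambda>b. (\<i>/2) * fx_v b + ((\<i>/2) * ex_v b + ((-\<i>/2) * fy_v b + (-\<i>/2) * ey_v b)))"
  unfolding g14 fx_v_def ex_v_def fy_v_def ey_v_def xivec_smul xivec_add by simp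
lemma d12: "gdelta (Tm 0 {1,2}) = (\<lambda>b. (\<i>/2) * hx_v b + (\<i>/2) * hy_v b)"
  unfolding g12 hx_v_def hy_v_def xivec_smul xivec_add by simp
lemma d34: "gdelta (Tm 0 {3,4}) = (\<lambda>b. (-\<i>/2) * hx_v b + (\<i>/2) * hy_v b)"
  unfolding g34 hx_v_def hy_v_def xivec_smul xivec_add by simp

lemma card2_sub: "I \<subseteq> {1,2,3,4::nat} \<Longrightarrow> card I = 2 \<Longrightarrow>
   I = {1,2} \<or> I = {1,3} \<or> I = {1,4} \<or> I = {2,3} \<or> I = {2,4} \<or> I = {3,4}"
proof -
  assume s: "I \<subseteq> {1,2,3,4::nat}" and c: "card I = 2"
  then obtain x y where xy: "I = {x,y}" "x \<noteq> y" by (auto simp: card_2_iff)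
  then have "x \<in> {1,2,3,4}" "y \<in> {1,2,3,4}" using s by auto
  then show ?thesis using xy by (auto simp: insert_commute)
qed

lemma deg0:
  assumes "b \<in> gbasis" "gdeg b = 0"
  shows "gdelta b \<in> Zs X"
proof (cases b)
  case (Tm n I)
  then have I: "I \<subseteq> {1,2,3,4}" using assms by (auto simp: gbasis_def)
  then have fI: "finite I" using finite_subset by auto
  have "2 * int n + int (card I) = 2" using assms Tm by simp
  then consider "n = 1" "card I = 0" | "n = 0" "card I = 2"
  proof (cases "n = 0")
    case True
    then show ?thesis using that \<open>2 * int n + int (card I) = 2\<close> by simp
  next
    case False
    then have "n = 1" "card I = 0" using \<open>2 * int n + int (card I) = 2\<close> by linarith+
    then show ?thesis using that by simp
  qed
  then show ?thesis
  proof cases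
    case 1
    then have "I = {}" using fI by simp
    then show ?thesis using Tm 1 Zs_gens by simp
  next
    case 2
    have zs: "(\<lambda>b. c1 * x1 b + (c2 * x2 b + (c3 * x3 b + c4 * x4 b))) \<in> Zs X"
      if "x1 \<in> Zs X" "x2 \<in> Zs X" "x3 \<in> Zs X" "x4 \<in> Zs X" for c1 c2 c3 c4 x1 x2 x3 x4
      using that by (intro Zs_add Zs_smul)
    have zs2: "(\<lambda>b. c1 * x1 b + c2 * x2 b) \<in> Zs X"
      if "x1 \<in> Zs X" "x2 \<in> Zs X" for c1 c2 x1 x2
      using that by (intro Zs_add Zs_smul)
    from card2_sub[OF I 2(2)] show ?thesis
      unfolding Tm 2(1)
      by (elim disjE) (simp_all only: d12 d13 d14 d23 d24 d34, (rule zs zs2; rule Zs_gens)+)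
  qed
next
  case Cen
  then show ?thesis using Zs_gens by simp
qed

lemma gdeg_ge: "gdeg b \<ge> -2" by (cases b) auto

lemma Fpre_sum: "finite S \<Longrightarrow> (\<forall>c\<in>S. g c \<in> Fpre X k) \<Longrightarrow> (\<lambda>k'. \<Sum>c\<in>S. g c k') \<in> Fpre X k"
  unfolding Fpre_def by (rule lspan_sum)

lemma word:
  "w \<in> lists gneg \<Longrightarrow> \<forall>b\<in>gbasis. \<forall>m. tv (b#w) (mdelta m) \<in> Fpre X (int (length w) - gdeg b div 2)"
proof (induction w)
  case Nil
  show ?case
  proof (intro ballI allI)
    fix b m assume b: "b \<in> gbasis"
    consider "gdeg b > 0" | "gdeg b < 0" | "gdeg b = 0" by linarith
    then show "tv [b] (mdelta m) \<in> Fpre X (int (length []) - gdeg b div 2)"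
    proof cases
      case 1
      have "(gdelta b, (\<lambda>_ _. 0)) \<in> actgens X" using b 1 unfolding actgens_def by blast
      then have "(\<lambda>k. embw [] (gdelta b) [] m k - tv [] ((\<lambda>_ _. 0) m) k) \<in> relgens X"
        unfolding relgens_def
        apply (intro UnI2 CollectI)
        apply (rule exI[where x="[]"], rule exI[where x="gdelta b"], rule exI[where x="\<lambda>_ _. 0"], rule exI[where x=m])
        by simp
      moreover have "(\<lambda>k. embw [] (gdelta b) [] m k - tv [] ((\<lambda>_ _. 0) m) k) = tv [b] (mdelta m)"
        by (auto simp: embw_nil_tv tv_def fun_eq_iff)
      ultimately show ?thesis by (metis rel_Fpre lspan.base)
    next
      case 2
      then have "b \<in> gneg" using b by (simp add: gneg_def)
      moreover have "gdeg b div 2 = -1" using 2 gdeg_ge[of b] by linarith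
      ultimately show ?thesis by (auto intro!: gen_in)
    next
      case 3
      then have "gdelta b \<in> Zs X" using b by (rule deg0[rotated])
      then have "embw [] (gdelta b) [] m \<in> Fpre X 0" unfolding Zs_def by blast
      then show ?thesis using 3 by (simp add: embw_nil_tv)
    qed
  qed
next
  case (Cons a w)
  then have a: "a \<in> gneg" and w: "w \<in> lists gneg" by auto
  have IH: "\<forall>b\<in>gbasis. \<forall>m. tv (b#w) (mdelta m) \<in> Fpre X (int (length w) - gdeg b div 2)"
    using Cons.IH w by blast
  have ab: "a \<in> gbasis" "gdeg a < 0" using a by (auto simp: gneg_def)
  have wb: "w \<in> lists gbasis" using w by (auto simp: gneg_def)
  show ?case
  proof (intro ballI allI)
    fix b m assume b: "b \<in> gbasis"
    define K where "K = int (length (a#w)) - gdeg b div 2"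
    define s :: complex where "s = (-1) ^ (gpar b * gpar a)"
    define r where "r = (\<lambda>k. embw [] (gdelta b) (a # w) m k - s * embw [] (gdelta a) (b # w) m k
        - embw [] (brk b a) w m k)"
    have "r \<in> relgens X" unfolding relgens_def r_def s_def using ab b wb by blast
    then have r: "r \<in> Fpre X K" by (metis rel_Fpre lspan.base)
    have "tv (b#w) (mdelta m) \<in> Fpre X (int (length w) - gdeg b div 2)" using IH b by blast
    then have "lact (gdelta a) (tv (b#w) (mdelta m)) \<in> Fpre X (int (length w) - gdeg b div 2 + 1)"
      using a by (rule lact_neg)
    then have t2: "embw [] (gdelta a) (b # w) m \<in> Fpre X K"
      by (simp add: K_def embw_nil_tv lact_gdelta_tv algebra_simps)
    define S where "S = {c \<in> gbasis. gdeg c \<le> gdeg b + gdeg a}"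
    have fS: "finite S" unfolding S_def by (rule gb_fin)
    have sup: "brk b a c \<noteq> 0 \<Longrightarrow> c \<in> S" for c using brk_deg[OF b ab(1)] by (auto simp: S_def)
    have "(\<lambda>k. \<Sum>c\<in>S. brk b a c * embw [] (gdelta c) w m k) \<in> Fpre X K"
    proof (rule Fpre_sum[OF fS], rule ballI)
      fix c assume "c \<in> S"
      show "(\<lambda>k. brk b a c * embw [] (gdelta c) w m k) \<in> Fpre X K"
      proof (cases "brk b a c = 0")
        case True then show ?thesis by (simp add: Fpre_zero)
      next
        case False
        then have c: "c \<in> gbasis" "gdeg c = gdeg b + gdeg a" using brk_deg[OF b ab(1)] by auto
        have "tv (c#w) (mdelta m) \<in> Fpre X (int (length w) - gdeg c div 2)" using IH c by blast
        moreover have "int (length w) - gdeg c div 2 \<le> K"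
          using c(2) gdeg_ge[of a] by (simp add: K_def)
        ultimately show ?thesis by (auto simp: embw_nil_tv intro: Fpre_smul Fpre_mono)
      qed
    qed
    then have t3: "embw [] (brk b a) w m \<in> Fpre X K" using embw_fin[OF fS sup] by simp
    have "(\<lambda>k. r k + s * embw [] (gdelta a) (b # w) m k + embw [] (brk b a) w m k) \<in> Fpre X K"
      using r t2 t3 by (intro Fpre_add Fpre_smul)
    moreover have "(\<lambda>k. r k + s * embw [] (gdelta a) (b # w) m k + embw [] (brk b a) w m k)
        = tv (b#a#w) (mdelta m)"
      by (simp add: r_def embw_nil_tv)
    ultimately show "tv (b#a#w) (mdelta m) \<in> Fpre X (int (length (a#w)) - gdeg b div 2)"
      by (simp add: K_def)
  qed
qed

lemma lact_main: "f \<in> Fpre X k \<Longrightarrow> b \<in> gbasis \<Longrightarrow> lact (gdelta b) f \<in> Fpre X (k - gdeg b div 2)"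
  unfolding Fpre_def[of X k]
proof (induction rule: lspan.induct)
  case zero then show ?case by (simp add: lact_zero Fpre_zero)
next
  case (base f)
  show ?case
  proof (cases "f \<in> relgens X")
    case True
    then have "lact (gdelta b) f \<in> lspan (relgens X)"
      using base by (intro lact_lspan_rel) (auto intro: lspan.base)
    then show ?thesis by (rule rel_Fpre)
  next
    case False
    have fin: "f \<in> (if k < 0 then {} else {tv w (mdelta m) | w m. w \<in> lists gneg \<and> length w \<le> nat k})"
      using base False by blast
    then have nk: "\<not> k < 0" by (cases "k < 0") auto
    with fin have "f \<in> {tv w (mdelta m) | w m. w \<in> lists gneg \<and> length w \<le> nat k}" by simp
    then obtain w m where wm: "f = tv w (mdelta m)" "w \<in> lists gneg" "length w \<le> nat k"
      by blast
    have e: "lact (gdelta b) f = tv (b#w) (mdelta m)" using wm by (simp add: lact_gdelta_tv)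
    have "tv (b#w) (mdelta m) \<in> Fpre X (int (length w) - gdeg b div 2)"
      using word[OF wm(2)] base.prems by blast
    moreover have "int (length w) - gdeg b div 2 \<le> k - gdeg b div 2" using wm(3) nk by linarith
    ultimately show ?thesis unfolding e by (rule Fpre_mono[rotated])
  qed
next
  case (add f g) then show ?case by (simp add: lact_add Fpre_add)
next
  case (smul f c) then show ?case by (simp add: lact_smul Fpre_smul)
qed

lemma lact_fin:
  assumes "finite S" "\<And>c. x c \<noteq> 0 \<Longrightarrow> c \<in> S"
  shows "lact x f = (\<lambda>k. \<Sum>c\<in>S. x c * lact (gdelta c) f k)"
proof (rule ext, clarify)
  fix w m
  show "lact x f (w, m) = (\<Sum>c\<in>S. x c * lact (gdelta c) f (w, m))"
  proof (cases w)
    case Nil then show ?thesis by (simp add: lact_def)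
  next
    case (Cons bb w')
    have "(\<Sum>c\<in>S. x c * lact (gdelta c) f (w, m)) = (\<Sum>c\<in>S. x c * gdelta c bb) * f (w', m)"
      by (simp add: Cons lact_def sum_distrib_right mult.assoc)
    also have "\<dots> = x bb * f (w', m)" using gdelta_sum[OF assms] by simp
    finally show ?thesis by (simp add: Cons lact_def)
  qed
qed

lemma coeff_dvd: "[:0, 1:] ^ k dvd (p::complex poly) \<Longrightarrow> coeff p n \<noteq> 0 \<Longrightarrow> k \<le> n"
proof -
  assume "[:0, 1:] ^ k dvd p" "coeff p n \<noteq> 0"
  then obtain q where "p = [:0, 1:] ^ k * q" "coeff p n \<noteq> 0" by (auto elim: dvdE)
  moreover have "[:0, 1:] ^ k = (monom 1 k :: complex poly)" by (simp add: monom_altdef)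
  ultimately have "coeff (monom 1 k * q) n \<noteq> 0" by metis
  then show "k \<le> n" by (simp add: coeff_monom_mult split: if_splits)
qed

theorem lemma6p5:
  fixes i :: nat and j :: int and X :: VX and p :: "complex poly"
  assumes "j \<ge> -1"
    and "[:0, 1:] ^ nat (j + 1) dvd p"
  shows "\<forall>f \<in> Fpre X (int i). lact (wvec p) f \<in> Fpre X (int i - j)"
proof
  fix f assume f: "f \<in> Fpre X (int i)"
  define S where "S = (\<lambda>n. Tm n {}) ` {..degree p}"
  have fS: "finite S" unfolding S_def by simp
  have sup: "wvec p c \<noteq> 0 \<Longrightarrow> c \<in> S" for c
  proof (cases c)
    case (Tm n I)
    assume nz: "wvec p c \<noteq> 0"
    then have "I = {}" "coeff p n \<noteq> 0" using Tm by (auto simp: wvec_def split: if_splits)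
    then show ?thesis using Tm le_degree unfolding S_def by blast
  qed (simp add: wvec_def)
  have "(\<lambda>k. \<Sum>c\<in>S. wvec p c * lact (gdelta c) f k) \<in> Fpre X (int i - j)"
  proof (rule Fpre_sum[OF fS], rule ballI)
    fix c assume "c \<in> S"
    then obtain n where c: "c = Tm n {}" unfolding S_def by blast
    show "(\<lambda>k. wvec p c * lact (gdelta c) f k) \<in> Fpre X (int i - j)"
    proof (cases "coeff p n = 0")
      case True then show ?thesis by (simp add: c wvec_def Fpre_zero)
    next
      case False
      then have "nat (j + 1) \<le> n" using coeff_dvd[OF assms(2)] by blast
      then have le: "int i - gdeg c div 2 \<le> int i - j" using assms(1) by (simp add: c)
      have "c \<in> gbasis" by (simp add: c gbasis_def)
      then have "lact (gdelta c) f \<in> Fpre X (int i - gdeg c div 2)" using f lact_main by blast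
      then show ?thesis using le by (intro Fpre_smul) (rule Fpre_mono[rotated])
    qed
  qed
  then show "lact (wvec p) f \<in> Fpre X (int i - j)" using lact_fin[OF fS sup] by simp
qed

end
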